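(* Let $n$ be even with $v_2(n)$ odd. Then $D_{S(n)^*}=C_{S(n)^*}=2$.
   Context: For a natural number $n$, $\mathbb Z_n=\mathbb Z/n\mathbb Z$, $S(n)=\{x^2:x\in\mathbb Z_n\}$, $S(n)^*=S(n)\setminus\{0\}$. For $A\subseteq\mathbb Z_n$, a sequence $(y_1,\dots,y_t)$ ($t\ge1$) in $\mathbb Z_n$ is an $A$-weighted zero-sum sequence if there exist $a_1,\dots,a_t\in A$ with $\sum a_iy_i=0$; a sequence has an $A$-weighted zero-sum subsequence if some nonempty subsequence is an $A$-weighted zero-sum sequence. $D_A(n)$ is the least positive integer $t$ such that every sequence of length $t$ in $\mathbb Z_n$ has an $A$-weighted zero-sum subsequence; $C_A(n)$ is the least positive integer $t$ such that every sequence of length $t$ in $\mathbb Z_n$ has an $A$-weighted zero-sum subsequence consisting of consecutive terms. $D_{S(n)^*}=D_{S(n)^*}(n)$, $C_{S(n)^*}=C_{S(n)^*}(n)$. $v_2(n)$ is the exponent of $2$ in $n$. *)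

theory Defs
  imports "HOL-Computational_Algebra.Computational_Algebra"
begin

text \<open>Z_n is modelled by the residues {0..<n} of int, arithmetic taken mod n.
  Sequences of length t in Z_n are lists ys of length t with entries in {0..<n}.\<close>

definition Zn :: "nat \<Rightarrow> int set" where
  "Zn n = {0..<int n}"

definition Sq :: "nat \<Rightarrow> int set" where
  "Sq n = {(x^2) mod int n | x. x \<in> Zn n}"

definition Sq_star :: "nat \<Rightarrow> int set" where
  "Sq_star n = Sq n - {0}"

definition weighted_zero_sum_on :: "nat \<Rightarrow> int set \<Rightarrow> int list \<Rightarrow> nat set \<Rightarrow> bool" where
  "weighted_zero_sum_on n A ys I \<longleftrightarrow>
     I \<noteq> {} \<and> I \<subseteq> {..<length ys} \<and>
     (\<exists>a. (\<forall>i\<in>I. a i \<in> A) \<and> (\<Sum>i\<in>I. a i * ys ! i) mod int n = 0)"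

definition has_wzs_subseq :: "nat \<Rightarrow> int set \<Rightarrow> int list \<Rightarrow> bool" where
  "has_wzs_subseq n A ys \<longleftrightarrow> (\<exists>I. weighted_zero_sum_on n A ys I)"

definition has_wzs_consec :: "nat \<Rightarrow> int set \<Rightarrow> int list \<Rightarrow> bool" where
  "has_wzs_consec n A ys \<longleftrightarrow> (\<exists>i j. i < j \<and> weighted_zero_sum_on n A ys {i..<j})"

definition D_const :: "int set \<Rightarrow> nat \<Rightarrow> nat" where
  "D_const A n = (LEAST t. 0 < t \<and>
      (\<forall>ys. length ys = t \<and> set ys \<subseteq> Zn n \<longrightarrow> has_wzs_subseq n A ys))"

definition C_const :: "int set \<Rightarrow> nat \<Rightarrow> nat" where
  "C_const A n = (LEAST t. 0 < t \<and>
      (\<forall>ys. length ys = t \<and> set ys \<subseteq> Zn n \<longrightarrow> has_wzs_consec n A ys))"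

end

theory Submission
  imports Defs
begin

lemma half_sq:
  fixes n :: nat
  assumes "n > 0" and "even n" and "odd (multiplicity (2::nat) n)"
  shows "int (n div 2) \<in> Sq_star n"
proof -
  define k where "k = multiplicity (2::nat) n"
  obtain m where nm: "n = 2 ^ k * m" and om: "\<not> 2 dvd m"
  proof -
    have "n \<noteq> 0" "\<not> is_unit (2::nat)" using assms(1) by auto
    from multiplicity_decompose'[OF this] show ?thesis using that unfolding k_def by blast
  qed
  obtain j where kj: "k = Suc (2*j)" using assms(3) unfolding k_def
    by (metis oddE Suc_eq_plus1 mult_2)
  obtain q where mq: "m = 2*q+1" using om by (metis oddE)
  have f: "(2::nat)^j*2^j = 4^j" by (simp flip: power_mult_distrib)
  have f2: "(2::nat)^(2*j) = 4^j" by (simp add: power_mult)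
  have n2: "n = 2 * (4^j * m)" using nm kj f2 by simp
  have h: "n div 2 = 4^j * m" using n2 by simp
  have "(2^j*m)^2 = 4^j * m * m" using f by (simp add: power2_eq_square algebra_simps)
  also have "\<dots> = n * q + n div 2" using h n2 mq by (simp add: algebra_simps)
  finally have "(2^j*m)^2 = n * q + n div 2" .
  hence "(2^j*m)^2 mod n = n div 2" using assms(1) by simp
  hence e: "(int (2^j*m mod n))^2 mod int n = int (n div 2)"
    by (metis of_nat_mod of_nat_power power_mod)
  have zn: "int (2^j*m mod n) \<in> Zn n" unfolding Zn_def using assms(1) by auto
  have "\<exists>x. int (n div 2) = x^2 mod int n \<and> x \<in> Zn n" using e zn by metis
  hence "int (n div 2) \<in> Sq n" unfolding Sq_def by blast
  moreover have "int (n div 2) \<noteq> 0" using assms(1,2) by auto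
  ultimately show ?thesis unfolding Sq_star_def by auto
qed

lemma key:
  fixes n :: nat and y :: int
  assumes "even n" and "even y"
  shows "(int (n div 2) * y) mod int n = 0"
proof -
  obtain z where "y = 2*z" using assms(2) by blast
  moreover have "int n = 2 * int (n div 2)" using assms(1) by auto
  ultimately have "int (n div 2) * y = int n * z" by simp
  thus ?thesis by simp
qed

lemma Sq_bound:
  assumes "n > 0" "x \<in> Sq n"
  shows "0 \<le> x \<and> x < int n"
proof -
  obtain y where "x = y^2 mod int n" using assms(2) unfolding Sq_def by blast
  thus ?thesis using assms(1) by simp
qed

lemma len1_fail:
  fixes n :: nat
  assumes "n > 1"
  shows "\<not> has_wzs_subseq n (Sq_star n) [1]"
proof
  assume "has_wzs_subseq n (Sq_star n) [1]"
  then obtain I where I: "weighted_zero_sum_on n (Sq_star n) [1] I"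
    unfolding has_wzs_subseq_def by blast
  hence I1: "I \<noteq> {}" "I \<subseteq> {..<1}" unfolding weighted_zero_sum_on_def by auto
  have "\<exists>a. (\<forall>i\<in>I. a i \<in> Sq_star n) \<and> (\<Sum>i\<in>I. a i * [1::int] ! i) mod int n = 0"
    using I unfolding weighted_zero_sum_on_def by (elim conjE) assumption
  then obtain a where a: "\<forall>i\<in>I. a i \<in> Sq_star n"
    and s: "(\<Sum>i\<in>I. a i * [1::int] ! i) mod int n = 0" by (elim exE conjE)
  have I0: "I = {0}" using I1 by auto
  have a0: "a 0 \<in> Sq_star n" using a unfolding I0 by simp
  have m0: "a 0 mod int n = 0" using s unfolding I0 by simp
  have "a 0 \<in> Sq n" "a 0 \<noteq> 0" using a0 unfolding Sq_star_def by simp_all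
  hence "0 < a 0 \<and> a 0 < int n" using Sq_bound[of n "a 0"] assms by auto
  thus False using m0 by simp
qed

lemma wzs_const:
  assumes "I \<noteq> {}" "I \<subseteq> {..<length ys}" "h \<in> A"
    "(\<Sum>i\<in>I. h * ys ! i) mod int n = 0"
  shows "weighted_zero_sum_on n A ys I"
  unfolding weighted_zero_sum_on_def
  using assms by (intro conjI exI[of _ "\<lambda>_. h"]) simp_all

lemma consec_intro: "weighted_zero_sum_on n A ys {i..<j} \<Longrightarrow> i < j \<Longrightarrow> has_wzs_consec n A ys"
  unfolding has_wzs_consec_def by (intro exI conjI)

lemma len2_ok:
  fixes n :: nat
  assumes "n > 0" and "even n" and "odd (multiplicity (2::nat) n)"
    and "length ys = 2"
  shows "has_wzs_consec n (Sq_star n) ys"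
proof -
  define h where "h = int (n div 2)"
  have hS: "h \<in> Sq_star n" using half_sq[OF assms(1-3)] h_def by simp
  have kk: "\<And>y. even y \<Longrightarrow> (h * y) mod int n = 0" using key[OF assms(2)] h_def by simp
  obtain y0 y1 where ys: "ys = [y0, y1]" using assms(4)
    by (auto simp: numeral_2_eq_2 length_Suc_conv)
  show ?thesis
  proof (cases "even y0")
    case True
    have "{0..<1::nat} = {0}" by auto
    hence "weighted_zero_sum_on n (Sq_star n) ys {0..<1}"
      using wzs_const[OF _ _ hS, of "{0..<1}" ys] ys kk[OF True] by simp
    thus ?thesis by (rule consec_intro) simp
  next
    case F0: False
    show ?thesis
    proof (cases "even y1")
      case True
      have e12: "{1..<2::nat} = {1}" by auto
      have s1: "(\<Sum>i\<in>{1..<2::nat}. h * ys ! i) = h * y1" unfolding e12 ys by simp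
      have a1: "{1..<2::nat} \<noteq> {}" unfolding e12 by simp
      have a2: "{1..<2::nat} \<subseteq> {..<length ys}" unfolding e12 ys by simp
      have a3: "(\<Sum>i\<in>{1..<2::nat}. h * ys ! i) mod int n = 0" unfolding s1 by (rule kk[OF True])
      have "weighted_zero_sum_on n (Sq_star n) ys {1..<2}"
        by (rule wzs_const[OF a1 a2 hS a3])
      thus ?thesis by (rule consec_intro) simp
    next
      case False
      hence ev: "even (y0 + y1)" using F0 by simp
      have st: "{0..<2::nat} = {0,1}" by auto
      have s2: "(\<Sum>i\<in>{0..<2}. h * ys ! i) = h * (y0 + y1)"
        using ys st by (simp add: algebra_simps)
      have a3: "(\<Sum>i\<in>{0..<2::nat}. h * ys ! i) mod int n = 0" unfolding s2 by (rule kk[OF ev])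
      have a1: "{0..<2::nat} \<noteq> {}" unfolding st by simp
      have a2: "{0..<2::nat} \<subseteq> {..<length ys}" unfolding st ys by simp
      have "weighted_zero_sum_on n (Sq_star n) ys {0..<2}"
        by (rule wzs_const[OF a1 a2 hS a3])
      thus ?thesis by (rule consec_intro) simp
    qed
  qed
qed

lemma consec_imp_subseq:
  assumes "has_wzs_consec n A ys" shows "has_wzs_subseq n A ys"
proof -
  obtain i j where "i < j" "weighted_zero_sum_on n A ys {i..<j}"
    using assms unfolding has_wzs_consec_def by (elim exE conjE)
  thus ?thesis unfolding has_wzs_subseq_def by (intro exI)
qed

theorem mainTheorem6:
  fixes n :: nat
  assumes "n > 0" and "even n" and "odd (multiplicity (2::nat) n)"
  shows "D_const (Sq_star n) n = 2 \<and> C_const (Sq_star n) n = 2"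
proof -
  have n1: "n > 1" using assms(1,2) by (cases "n = 1") auto
  have one: "set [1::int] \<subseteq> Zn n" unfolding Zn_def using n1 by auto
  have D: "D_const (Sq_star n) n = 2"
    unfolding D_const_def
  proof (rule Least_equality)
    show "0 < (2::nat) \<and> (\<forall>ys. length ys = 2 \<and> set ys \<subseteq> Zn n \<longrightarrow> has_wzs_subseq n (Sq_star n) ys)"
      by (simp add: len2_ok[OF assms] consec_imp_subseq)
  next
    fix t assume t: "0 < t \<and> (\<forall>ys. length ys = t \<and> set ys \<subseteq> Zn n \<longrightarrow> has_wzs_subseq n (Sq_star n) ys)"
    show "2 \<le> t"
    proof (rule ccontr)
      assume "\<not> 2 \<le> t" hence "t = 1" using t by auto
      thus False using t len1_fail[OF n1] one by auto
    qed
  qed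
  have C: "C_const (Sq_star n) n = 2"
    unfolding C_const_def
  proof (rule Least_equality)
    show "0 < (2::nat) \<and> (\<forall>ys. length ys = 2 \<and> set ys \<subseteq> Zn n \<longrightarrow> has_wzs_consec n (Sq_star n) ys)"
      by (simp add: len2_ok[OF assms])
  next
    fix t assume t: "0 < t \<and> (\<forall>ys. length ys = t \<and> set ys \<subseteq> Zn n \<longrightarrow> has_wzs_consec n (Sq_star n) ys)"
    show "2 \<le> t"
    proof (rule ccontr)
      assume "\<not> 2 \<le> t" hence "t = 1" using t by auto
      thus False using t len1_fail[OF n1] one consec_imp_subseq by fastforce
    qed
  qed
  show ?thesis using D C by simp
qed

end
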